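(* Let $X$, $\partial X$ be Banach spaces, $A_m:D(A_m)\subseteq X\to X$ a closed linear operator, $L\in\mathcal{L}(X,\partial X)$ surjective, and $A_0\subseteq A_m$ with $D(A_0):=D(A_m)\cap\ker(L)$. For $\lambda\in\rho(A_0)$ let $L^{A_m}_\lambda:=(L|_{\ker(\lambda-A_m)})^{-1}\in\mathcal{L}(\partial X,X)$ (this inverse exists and is bounded). Let $P:D(P)\subseteq X\to X$ be relatively $A_m$-bounded, and let $A_0+P$ have domain $D(A_0)$. Then for every $\lambda\in\rho(A_0)\cap\rho(A_0+P)$ the restriction $L|_{\ker(\lambda-A_m-P)}:\ker(\lambda-A_m-P)\to\partial X$ is bijective, its inverse $L^{A_m+P}_\lambda$ belongs to $\mathcal{L}(\partial X,X)$, and $$L^{A_m+P}_\lambda-L^{A_m}_\lambda=R(\lambda,A_0+P)PL^{A_m}_\lambda=R(\lambda,A_0)PL^{A_m+P}_\lambda.$$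
   Context: $P$ relatively $A_m$-bounded means $D(A_m)\subseteq D(P)$ and $\|Pf\|\le a\|A_mf\|+b\|f\|$ for all $f\in D(A_m)$, for some $a,b\ge0$; here $A_m+P$ has domain $D(A_m)$. *)

theory Defs
  imports "HOL-Analysis.Analysis"
begin

text \<open>Complex Banach spaces: real Banach spaces equipped with a compatible
  complex scalar multiplication with norm(c x) = |c| norm(x).\<close>
class cbanach = banach +
  fixes cmult :: "complex \<Rightarrow> 'a \<Rightarrow> 'a"
  assumes cmult_of_real: "cmult (of_real r) x = r *\<^sub>R x"
    and cmult_add_left: "cmult (a + b) x = cmult a x + cmult b x"
    and cmult_add_right: "cmult a (x + y) = cmult a x + cmult a y"
    and cmult_assoc: "cmult a (cmult b x) = cmult (a * b) x"
    and norm_cmult: "norm (cmult a x) = cmod a * norm x"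

definition bounded_clin :: "('a::cbanach \<Rightarrow> 'b::cbanach) \<Rightarrow> bool" where
  "bounded_clin T \<longleftrightarrow> bounded_linear T \<and> (\<forall>c x. T (cmult c x) = cmult c (T x))"

definition lin_op :: "'a::cbanach set \<Rightarrow> ('a \<Rightarrow> 'b::cbanach) \<Rightarrow> bool" where
  "lin_op D T \<longleftrightarrow> 0 \<in> D \<and> (\<forall>x\<in>D. \<forall>y\<in>D. x + y \<in> D) \<and> (\<forall>c. \<forall>x\<in>D. cmult c x \<in> D)
     \<and> (\<forall>x\<in>D. \<forall>y\<in>D. T (x + y) = T x + T y) \<and> (\<forall>c. \<forall>x\<in>D. T (cmult c x) = cmult c (T x))"

definition closed_op :: "'a::cbanach set \<Rightarrow> ('a \<Rightarrow> 'a) \<Rightarrow> bool" where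
  "closed_op D T \<longleftrightarrow> closed {(x, T x) | x. x \<in> D}"

definition eig_space :: "complex \<Rightarrow> 'a::cbanach set \<Rightarrow> ('a \<Rightarrow> 'a) \<Rightarrow> 'a set" where
  "eig_space lam D T = {x \<in> D. cmult lam x - T x = 0}"

definition resolvent :: "complex \<Rightarrow> 'a::cbanach set \<Rightarrow> ('a \<Rightarrow> 'a) \<Rightarrow> 'a \<Rightarrow> 'a" where
  "resolvent lam D T = inv_into D (\<lambda>x. cmult lam x - T x)"

definition resolvent_set :: "'a::cbanach set \<Rightarrow> ('a \<Rightarrow> 'a) \<Rightarrow> complex set" where
  "resolvent_set D T = {lam. bij_betw (\<lambda>x. cmult lam x - T x) D UNIV
                              \<and> bounded_clin (resolvent lam D T)}"

definition dirichlet_op :: "('a::cbanach \<Rightarrow> 'b::cbanach) \<Rightarrow> 'a set \<Rightarrow> ('a \<Rightarrow> 'a) \<Rightarrow> complex \<Rightarrow> 'b \<Rightarrow> 'a" where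
  "dirichlet_op L D T lam = inv_into (eig_space lam D T) L"

definition rel_bounded :: "'a::cbanach set \<Rightarrow> ('a \<Rightarrow> 'a) \<Rightarrow> 'a set \<Rightarrow> ('a \<Rightarrow> 'a) \<Rightarrow> bool" where
  "rel_bounded D T DP P \<longleftrightarrow> D \<subseteq> DP \<and>
     (\<exists>a b. a \<ge> 0 \<and> b \<ge> 0 \<and> (\<forall>f\<in>D. norm (P f) \<le> a * norm (T f) + b * norm f))"

end

theory Submission
  imports Defs
begin

lemma cm_zero: "cmult c (0::'a::cbanach) = 0"
  using cmult_add_right[of c "0::'a" 0] by simp

lemma cm_diff: "cmult c ((x::'a::cbanach) - y) = cmult c x - cmult c y"
  using cmult_add_right[of c "x - y" y] by (simp add: algebra_simps)

lemma cm_m1: "cmult (-1) (x::'a::cbanach) = - x"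
  using cmult_of_real[of "-1" x] by simp

lemma lin_diff:
  assumes "lin_op D T" "x \<in> D" "y \<in> D"
  shows "x - y \<in> D" "T (x - y) = T x - T y"
proof -
  have m: "cmult (-1) y \<in> D" "T (cmult (-1) y) = - T y"
    using assms cm_m1 unfolding lin_op_def by metis+
  have e: "x - y = x + cmult (-1) y" by (simp add: cm_m1)
  show "x - y \<in> D" using assms m unfolding e lin_op_def by blast
  show "T (x - y) = T x - T y" using assms m unfolding e lin_op_def by simp
qed

lemma lin_zero: "lin_op D T \<Longrightarrow> T 0 = 0"
  unfolding lin_op_def by (metis add_cancel_right_right)

lemma lin_add: "lin_op D T \<Longrightarrow> x \<in> D \<Longrightarrow> y \<in> D \<Longrightarrow> x + y \<in> D \<and> T (x + y) = T x + T y"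
  unfolding lin_op_def by blast

lemma bclin_comp: "bounded_clin f \<Longrightarrow> bounded_clin g \<Longrightarrow> bounded_clin (\<lambda>x. f (g x))"
  unfolding bounded_clin_def using bounded_linear_compose[of f g] by (auto simp: o_def)

lemma bclin_add: "bounded_clin f \<Longrightarrow> bounded_clin g \<Longrightarrow> bounded_clin (\<lambda>x. f x + g x)"
  unfolding bounded_clin_def using bounded_linear_add[of f g] by (auto simp: cmult_add_right)

theorem lemma4p6:
  fixes Am :: "'x::cbanach \<Rightarrow> 'x" and DAm :: "'x set"
    and L :: "'x \<Rightarrow> 'y::cbanach"
    and P :: "'x \<Rightarrow> 'x" and DP :: "'x set"
    and lam :: complex
  assumes Am_lin: "lin_op DAm Am"
    and Am_closed: "closed_op DAm Am"
    and L_bdd: "bounded_clin L"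
    and L_surj: "surj L"
    and dirichlet: "\<And>mu. mu \<in> resolvent_set (DAm \<inter> {x. L x = 0}) Am \<Longrightarrow>
             bij_betw L (eig_space mu DAm Am) UNIV \<and> bounded_clin (dirichlet_op L DAm Am mu)"
    and P_lin: "lin_op DP P"
    and P_relbdd: "rel_bounded DAm Am DP P"
    and lam0: "lam \<in> resolvent_set (DAm \<inter> {x. L x = 0}) Am"
    and lamP: "lam \<in> resolvent_set (DAm \<inter> {x. L x = 0}) (\<lambda>x. Am x + P x)"
  shows "bij_betw L (eig_space lam DAm (\<lambda>x. Am x + P x)) UNIV
       \<and> bounded_clin (dirichlet_op L DAm (\<lambda>x. Am x + P x) lam)
       \<and> (\<forall>y. dirichlet_op L DAm (\<lambda>x. Am x + P x) lam y - dirichlet_op L DAm Am lam y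
              = resolvent lam (DAm \<inter> {x. L x = 0}) (\<lambda>x. Am x + P x) (P (dirichlet_op L DAm Am lam y)))
       \<and> (\<forall>y. dirichlet_op L DAm (\<lambda>x. Am x + P x) lam y - dirichlet_op L DAm Am lam y
              = resolvent lam (DAm \<inter> {x. L x = 0}) Am (P (dirichlet_op L DAm (\<lambda>x. Am x + P x) lam y)))"
proof -
  define D0 where "D0 = DAm \<inter> {x. L x = 0}"
  define E where "E = eig_space lam DAm Am"
  define EP where "EP = eig_space lam DAm (\<lambda>x. Am x + P x)"
  define u where "u = dirichlet_op L DAm Am lam"
  define v where "v = dirichlet_op L DAm (\<lambda>x. Am x + P x) lam"
  define R0 where "R0 = resolvent lam D0 Am"
  define RP where "RP = resolvent lam D0 (\<lambda>x. Am x + P x)"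
  have DP: "DAm \<subseteq> DP" using P_relbdd unfolding rel_bounded_def by blast
  obtain a b where ab: "a \<ge> 0" "b \<ge> 0" "\<And>f. f \<in> DAm \<Longrightarrow> norm (P f) \<le> a * norm (Am f) + b * norm f"
    using P_relbdd unfolding rel_bounded_def by blast
  have Llin: "linear L" using L_bdd unfolding bounded_clin_def bounded_linear_def by blast
  have Ladd: "L (x + y) = L x + L y" "L (x - y) = L x - L y" for x y
    using Llin by (simp_all add: linear_add linear_diff)
  have dl: "bij_betw L E UNIV" "bounded_clin u"
    using dirichlet[OF lam0] unfolding E_def u_def by auto
  have uE: "u y \<in> E" and Lu: "L (u y) = y" for y
    using dl(1) unfolding u_def dirichlet_op_def E_def bij_betw_def
    by (auto intro: inv_into_into f_inv_into_f)
  have uD: "u y \<in> DAm" and uAm: "cmult lam (u y) - Am (u y) = 0" for y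
    using uE[of y] unfolding E_def eig_space_def by auto
  have r0: "bij_betw (\<lambda>x. cmult lam x - Am x) D0 UNIV" "bounded_clin R0"
    using lam0 unfolding resolvent_set_def R0_def D0_def by auto
  have rP: "bij_betw (\<lambda>x. cmult lam x - (Am x + P x)) D0 UNIV" "bounded_clin RP"
    using lamP unfolding resolvent_set_def RP_def D0_def by auto
  have R0D: "R0 z \<in> D0" and R0e: "cmult lam (R0 z) - Am (R0 z) = z" for z
    using r0(1) unfolding R0_def resolvent_def bij_betw_def
    by (auto intro: inv_into_into f_inv_into_f[where f="\<lambda>x. cmult lam x - Am x"])
  have RPD: "RP z \<in> D0" and RPe: "cmult lam (RP z) - (Am (RP z) + P (RP z)) = z" for z
    using rP(1) unfolding RP_def resolvent_def bij_betw_def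
    by (auto intro: inv_into_into f_inv_into_f[where f="\<lambda>x. cmult lam x - (Am x + P x)"])
  have injP: "inj_on (\<lambda>x. cmult lam x - (Am x + P x)) D0" using rP(1) bij_betw_def by blast
  have inj0: "inj_on (\<lambda>x. cmult lam x - Am x) D0" using r0(1) bij_betw_def by blast
  have injL: "inj_on L EP"
  proof (rule inj_onI)
    fix x1 x2 assume x: "x1 \<in> EP" "x2 \<in> EP" "L x1 = L x2"
    have xd: "x1 \<in> DAm" "x2 \<in> DAm" "cmult lam x1 - (Am x1 + P x1) = 0" "cmult lam x2 - (Am x2 + P x2) = 0"
      using x unfolding EP_def eig_space_def by auto
    have dD: "x1 - x2 \<in> DAm" "Am (x1 - x2) = Am x1 - Am x2" using lin_diff[OF Am_lin xd(1,2)] by auto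
    have "P (x1 - x2) = P x1 - P x2" using lin_diff[OF P_lin] xd DP by blast
    then have "cmult lam (x1 - x2) - (Am (x1 - x2) + P (x1 - x2)) = 0"
      using xd(3,4) dD by (simp add: cm_diff algebra_simps)
    also have "0 = cmult lam 0 - (Am 0 + P 0)" using lin_zero[OF Am_lin] lin_zero[OF P_lin] cm_zero by simp
    finally have e: "cmult lam (x1 - x2) - (Am (x1 - x2) + P (x1 - x2)) = cmult lam 0 - (Am 0 + P 0)" .
    have "x1 - x2 \<in> D0" "0 \<in> D0" using dD(1) x(3) Ladd(2)[of x1 x2] Am_lin Llin
      unfolding D0_def lin_op_def by (auto simp: linear_0)
    then have "x1 - x2 = 0" using injP e unfolding inj_on_def by blast
    then show "x1 = x2" by simp
  qed
  define w where "w y = u y + RP (P (u y))" for y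
  have wEP: "w y \<in> EP" and Lw: "L (w y) = y" for y
  proof -
    have rd: "RP (P (u y)) \<in> DAm" "L (RP (P (u y))) = 0" using RPD unfolding D0_def by auto
    have s: "w y \<in> DAm" "Am (w y) = Am (u y) + Am (RP (P (u y)))"
      using lin_add[OF Am_lin uD rd(1)] unfolding w_def by auto
    have sp: "P (w y) = P (u y) + P (RP (P (u y)))"
      using lin_add[OF P_lin] uD rd(1) DP unfolding w_def by blast
    have "cmult lam (w y) - (Am (w y) + P (w y))
       = (cmult lam (u y) - Am (u y)) - P (u y) + (cmult lam (RP (P (u y))) - (Am (RP (P (u y))) + P (RP (P (u y)))))"
      unfolding s sp by (simp add: w_def cmult_add_right algebra_simps)
    also have "\<dots> = 0" using uAm RPe by simp
    finally show "w y \<in> EP" using s unfolding EP_def eig_space_def by simp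
    show "L (w y) = y" unfolding w_def Ladd using Lu rd by simp
  qed
  have vw: "v y = w y" for y
    unfolding v_def dirichlet_op_def EP_def[symmetric] by (rule inv_into_f_eq[OF injL wEP Lw])
  have bij: "bij_betw L EP UNIV"
    unfolding bij_betw_def using injL wEP Lw by (metis UNIV_eq_I imageI)
  have Pu: "bounded_clin (\<lambda>y. P (u y))"
  proof -
    have ub: "bounded_linear u" "\<And>c y. u (cmult c y) = cmult c (u y)" using dl(2) unfolding bounded_clin_def by auto
    obtain K where K: "\<And>y. norm (u y) \<le> norm y * K" "K \<ge> 0"
      using bounded_linear.nonneg_bounded[OF ub(1)] by blast
    have padd: "P (u (x + y)) = P (u x) + P (u y)" for x y
      using lin_add[OF P_lin] uD DP linear_add[OF bounded_linear.linear[OF ub(1)]] by (metis subsetD)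
    have pc: "P (u (cmult c y)) = cmult c (P (u y))" for c y
    proof -
      have "u y \<in> DP" using uD DP by blast
      then show ?thesis using P_lin ub(2) unfolding lin_op_def by simp
    qed
    have pn: "norm (P (u y)) \<le> norm y * ((a * cmod lam + b) * K)" for y
    proof -
      have "Am (u y) = cmult lam (u y)" using uAm[of y] by simp
      then have "norm (P (u y)) \<le> (a * cmod lam + b) * norm (u y)"
        using ab(3)[OF uD[of y]] by (simp add: norm_cmult algebra_simps)
      also have "\<dots> \<le> (a * cmod lam + b) * (norm y * K)"
        using K ab by (intro mult_left_mono) auto
      finally show ?thesis by (simp add: algebra_simps)
    qed
    have "bounded_linear (\<lambda>y. P (u y))"
    proof (rule bounded_linear_intro)
      show "P (u (x + y)) = P (u x) + P (u y)" for x y by (rule padd)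
      show "P (u (r *\<^sub>R x)) = r *\<^sub>R P (u x)" for r x
        using pc[of "of_real r" x] by (simp add: cmult_of_real)
      show "norm (P (u x)) \<le> norm x * ((a * cmod lam + b) * K)" for x by (rule pn)
    qed
    then show ?thesis unfolding bounded_clin_def using pc by blast
  qed
  have bv: "bounded_clin v"
  proof -
    have "bounded_clin w" unfolding w_def
      by (intro bclin_add dl(2) bclin_comp[OF rP(2) Pu])
    moreover have "v = w" using vw by auto
    ultimately show ?thesis by simp
  qed
  have id1: "v y - u y = RP (P (u y))" for y using vw w_def by simp
  have id2: "v y - u y = R0 (P (v y))" for y
  proof -
    have vE: "v y \<in> DAm" "cmult lam (v y) - (Am (v y) + P (v y)) = 0" "L (v y) = y"
      using wEP[of y] Lw[of y] vw[of y] unfolding EP_def eig_space_def by auto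
    have d: "v y - u y \<in> DAm" "Am (v y - u y) = Am (v y) - Am (u y)"
      using lin_diff[OF Am_lin vE(1) uD] by auto
    have dD0: "v y - u y \<in> D0" using d vE Lu[of y] Ladd(2)[of "v y" "u y"] unfolding D0_def by simp
    have "cmult lam (v y - u y) - Am (v y - u y) = P (v y)"
      using d vE(2) uAm[of y] by (simp add: cm_diff algebra_simps)
    also have "\<dots> = cmult lam (R0 (P (v y))) - Am (R0 (P (v y)))" using R0e by simp
    finally show ?thesis using inj0 dD0 R0D unfolding inj_on_def by blast
  qed
  show ?thesis
    using bij bv id1 id2 unfolding EP_def v_def u_def RP_def R0_def D0_def by simp
qed

end
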